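(* Let $C$ be a linear code over $\mathbb{Z}_4+u\mathbb{Z}_4$ of length $n$ and $C^{\perp}$ its dual. Then $$Lee_{C^{\perp}}(W,X)=\frac{1}{|C|}\,Lee_C(W+X,W-X).$$
   Context: $\mathbb{Z}_4+u\mathbb{Z}_4$ is the commutative ring of characteristic $4$ with $u^2=0$; a linear code of length $n$ is a submodule of $(\mathbb{Z}_4+u\mathbb{Z}_4)^n$, and $C^\perp$ is its dual with respect to the Euclidean inner product $\sum_i x_iy_i$ computed in the ring. The Lee weight on $\mathbb{Z}_4$ is $0,1,2,1$ for $0,1,2,3$; the Lee weight on $\mathbb{Z}_4+u\mathbb{Z}_4$ is $w_L(a+ub)=w_L(b)+w_L(a+b)$, extended additively to vectors. The Lee weight enumerator is $Lee_C(W,X)=\sum_{c\in C}W^{4n-w_L(c)}X^{w_L(c)}$. *)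

theory Defs
  imports Complex_Main "HOL-Library.Numeral_Type" "HOL-Library.Product_Plus"
begin

text \<open>The ring Z4 + uZ4 with u^2 = 0. An element a + u b is represented by the
  pair (a, b) :: 4 \<times> 4, where the type 4 is Z/4Z. Addition, zero and
  negation are componentwise (from Product_Plus); multiplication is
  (a + u b)(c + u d) = ac + u(ad + bc).\<close>

type_synonym zu = "4 \<times> 4"

definition zu_mult :: "zu \<Rightarrow> zu \<Rightarrow> zu" where
  "zu_mult x y = (fst x * fst y, fst x * snd y + snd x * fst y)"

definition vecs :: "nat \<Rightarrow> (nat \<Rightarrow> zu) set" where
  "vecs n = {v. \<forall>i. n \<le> i \<longrightarrow> v i = 0}"

definition smult_zu :: "zu \<Rightarrow> (nat \<Rightarrow> zu) \<Rightarrow> (nat \<Rightarrow> zu)" where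
  "smult_zu r v = (\<lambda>i. zu_mult r (v i))"

definition linear_code :: "nat \<Rightarrow> (nat \<Rightarrow> zu) set \<Rightarrow> bool" where
  "linear_code n C \<longleftrightarrow> C \<subseteq> vecs n \<and> (\<lambda>i. 0) \<in> C
     \<and> (\<forall>x\<in>C. \<forall>y\<in>C. (\<lambda>i. x i + y i) \<in> C)
     \<and> (\<forall>r. \<forall>x\<in>C. smult_zu r x \<in> C)"

definition inner_zu :: "nat \<Rightarrow> (nat \<Rightarrow> zu) \<Rightarrow> (nat \<Rightarrow> zu) \<Rightarrow> zu" where
  "inner_zu n x y = (\<Sum>i<n. zu_mult (x i) (y i))"

definition dual_code :: "nat \<Rightarrow> (nat \<Rightarrow> zu) set \<Rightarrow> (nat \<Rightarrow> zu) set" where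
  "dual_code n C = {y \<in> vecs n. \<forall>x\<in>C. inner_zu n x y = 0}"

definition lee4 :: "4 \<Rightarrow> nat" where
  "lee4 a = (if a = 0 then 0 else if a = 2 then 2 else 1)"

definition lee_zu :: "zu \<Rightarrow> nat" where
  "lee_zu x = lee4 (snd x) + lee4 (fst x + snd x)"

definition lee_wt :: "nat \<Rightarrow> (nat \<Rightarrow> zu) \<Rightarrow> nat" where
  "lee_wt n v = (\<Sum>i<n. lee_zu (v i))"

definition lee_enum :: "nat \<Rightarrow> (nat \<Rightarrow> zu) set \<Rightarrow> real \<Rightarrow> real \<Rightarrow> real" where
  "lee_enum n C W X = (\<Sum>c\<in>C. W ^ (4 * n - lee_wt n c) * X ^ lee_wt n c)"

end

theory Submission
  imports Defs "HOL-Library.FuncSet"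
begin

lemma UNIV_4: "(UNIV::4 set) = {0,1,2,3}"
proof -
  have c: "card {0::4,1,2,3} = card (UNIV::4 set)" by simp
  have "{0::4,1,2,3} = UNIV"
    using card_subset_eq[of "UNIV::4 set" "{0,1,2,3}", OF finite subset_UNIV c] .
  then show ?thesis by (rule sym)
qed
lemma sum4: "(\<Sum>x\<in>(UNIV::4 set). f x) = f 0 + f 1 + f 2 + f 3"
  unfolding UNIV_4 by (simp add: add.assoc)
definition i4 :: "4 \<Rightarrow> complex" where
  "i4 a = (if a = 0 then 1 else if a = 1 then \<i> else if a = 2 then -1 else -\<i>)"
definition chi :: "zu \<Rightarrow> complex" where "chi r = i4 (fst r + snd r)"
definition gzc :: "complex \<Rightarrow> complex \<Rightarrow> zu \<Rightarrow> complex" where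
  "gzc w x s = w ^ (4 - lee_zu s) * x ^ lee_zu s"
lemma sumzu: "(\<Sum>s\<in>(UNIV::zu set). f s) = (\<Sum>a\<in>UNIV. \<Sum>b\<in>UNIV. f (a,b))"
  by (simp add: UNIV_Times_UNIV[symmetric] sum.cartesian_product del: UNIV_Times_UNIV)
lemma coord_all: fixes w x :: complex
  shows "\<forall>a\<in>{0,1,2,3}. \<forall>b\<in>{0,1,2,3}. (\<Sum>s\<in>UNIV. chi (zu_mult (a,b) s) * gzc w x s) = gzc (w+x) (w-x) (a,b)"
  apply (simp only: ball_simps)
  apply (intro conjI)
  apply (simp_all add: sumzu sum4 chi_def i4_def gzc_def zu_mult_def lee_zu_def lee4_def)
  apply algebra+
  done

lemma coord: fixes w x :: complex
  shows "(\<Sum>s\<in>UNIV. chi (zu_mult r s) * gzc w x s) = gzc (w+x) (w-x) r"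
proof -
  obtain a b where r: "r = (a,b)" by force
  have "a \<in> {0,1,2,3}" "b \<in> {0,1,2,3}" by (simp_all add: UNIV_4[symmetric])
  then show ?thesis unfolding r using coord_all[of w x] by blast
qed

lemma i4_add: "i4 (a + b) = i4 a * i4 b"
proof -
  have "a \<in> {0,1,2,3}" "b \<in> {0,1,2,3}" by (simp_all add: UNIV_4[symmetric])
  then show ?thesis by (auto simp: i4_def)
qed

lemma zu_ideal: assumes "t \<noteq> 0" shows "\<exists>r. zu_mult r t = (0,2)"
proof -
  obtain a b where r: "t = (a,b)" by force
  have "a \<in> {0,1,2,3}" "b \<in> {0,1,2,3}" by (simp_all add: UNIV_4[symmetric])
  then have "\<exists>c\<in>{0,1,2,3::4}. \<exists>d\<in>{0,1,2,3::4}. zu_mult (c,d) t = (0,2)" using assms unfolding r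
    by (elim insertE; auto simp: zu_mult_def zero_prod_def)
  then show ?thesis by blast
qed
lemma lee4_le: "lee4 a \<le> 2" by (simp add: lee4_def)
lemma lee_zu_le: "lee_zu s \<le> 4" using lee4_le[of "snd s"] lee4_le[of "fst s + snd s"]
  by (simp add: lee_zu_def)

definition gv :: "nat \<Rightarrow> complex \<Rightarrow> complex \<Rightarrow> (nat \<Rightarrow> zu) \<Rightarrow> complex" where
  "gv n w x y = (\<Prod>i<n. gzc w x (y i))"

lemma lee_term:
  "complex_of_real (W ^ (4*n - lee_wt n c) * X ^ lee_wt n c) = gv n (of_real W) (of_real X) c"
proof -
  have "gv n (of_real W) (of_real X) c
     = (\<Prod>i<n. (of_real W::complex) ^ (4 - lee_zu (c i))) * (\<Prod>i<n. (of_real X::complex) ^ lee_zu (c i))"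
    by (simp add: gv_def gzc_def prod.distrib)
  also have "\<dots> = (of_real W::complex) ^ (\<Sum>i<n. 4 - lee_zu (c i)) * (of_real X) ^ (\<Sum>i<n. lee_zu (c i))"
    by (simp add: power_sum)
  also have "(\<Sum>i<n. 4 - lee_zu (c i)) = (\<Sum>i<n. 4) - (\<Sum>i<n. lee_zu (c i))"
    by (rule sum_subtractf_nat) (simp add: lee_zu_le)
  finally show ?thesis by (simp add: lee_wt_def mult.commute)
qed

lemma lee_enum_c: "complex_of_real (lee_enum n S W X) = (\<Sum>c\<in>S. gv n (of_real W) (of_real X) c)"
  unfolding lee_enum_def of_real_sum by (simp only: lee_term)

lemma finite_vecs: "finite (vecs n)"
proof -
  have "vecs n = {f. \<forall>x. (x \<in> {..<n} \<longrightarrow> f x \<in> UNIV) \<and> (x \<notin> {..<n} \<longrightarrow> f x = 0)}"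
    by (auto simp: vecs_def not_less)
  then show ?thesis using finite_set_of_finite_funs[of "{..<n}" "UNIV::zu set" 0] by simp
qed

lemma chi_add: "chi (a + b) = chi a * chi b"
proof -
  have "fst (a+b) + snd (a+b) = (fst a + snd a) + (fst b + snd b)" by (simp add: algebra_simps)
  then show ?thesis by (simp add: chi_def i4_add)
qed
lemma chi_0[simp]: "chi 0 = 1" by (simp add: chi_def i4_def)
lemma chi_02: "chi (0,2) = -1" by (simp add: chi_def i4_def)

lemma chi_sum: "finite A \<Longrightarrow> chi (\<Sum>i\<in>A. f i) = (\<Prod>i\<in>A. chi (f i))"
  by (induction A rule: finite_induct) (simp_all add: chi_add)

lemma zu_mult_add_left: "zu_mult (a+b) c = zu_mult a c + zu_mult b c"
  by (simp add: zu_mult_def prod_eq_iff algebra_simps)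
lemma zu_mult_add_right: "zu_mult c (a+b) = zu_mult c a + zu_mult c b"
  by (simp add: zu_mult_def prod_eq_iff algebra_simps)
lemma zu_mult_0_right[simp]: "zu_mult c 0 = 0"
  by (simp add: zu_mult_def prod_eq_iff)
lemma zu_mult_assoc: "zu_mult (zu_mult r a) c = zu_mult r (zu_mult a c)"
  by (simp add: zu_mult_def prod_eq_iff algebra_simps)
lemma zu_mult_m1: "zu_mult (-1,0) p = - p"
  by (simp add: zu_mult_def prod_eq_iff)

lemma zu_mult_sum: "finite A \<Longrightarrow> zu_mult r (\<Sum>i\<in>A. f i) = (\<Sum>i\<in>A. zu_mult r (f i))"
  by (induction A rule: finite_induct) (simp_all add: zu_mult_add_right)

lemma inner_add_left: "inner_zu n (\<lambda>i. x i + z i) y = inner_zu n x y + inner_zu n z y"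
  by (simp add: inner_zu_def zu_mult_add_left sum.distrib)
lemma inner_smult: "inner_zu n (smult_zu r x) y = zu_mult r (inner_zu n x y)"
  by (simp add: inner_zu_def smult_zu_def zu_mult_sum zu_mult_assoc)

lemma transform:
  fixes w x :: complex
  shows "gv n (w+x) (w-x) v = (\<Sum>y\<in>vecs n. chi (inner_zu n v y) * gv n w x y)"
proof -
  let ?P = "PiE {..<n} (\<lambda>_. UNIV::zu set)"
  let ?F = "\<lambda>i s. chi (zu_mult (v i) s) * gzc w x s"
  define ext where "ext = (\<lambda>g::nat\<Rightarrow>zu. \<lambda>i. if i < n then g i else 0)"
  have "gv n (w+x) (w-x) v = (\<Prod>i<n. \<Sum>s\<in>UNIV. ?F i s)"
    by (simp add: gv_def coord)
  also have "\<dots> = (\<Sum>g\<in>?P. \<Prod>i<n. ?F i (g i))"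
    by (rule prod_sum_PiE) auto
  also have "\<dots> = (\<Sum>g\<in>?P. (\<lambda>y. \<Prod>i<n. ?F i (y i)) (ext g))"
    by (intro sum.cong refl prod.cong) (auto simp: ext_def)
  also have "\<dots> = (\<Sum>y\<in>vecs n. \<Prod>i<n. ?F i (y i))"
  proof (rule sum.reindex_bij_betw)
    show "bij_betw ext ?P (vecs n)"
      by (rule bij_betw_byWitness[where f'="\<lambda>y. restrict y {..<n}"])
         (auto simp: ext_def vecs_def fun_eq_iff PiE_def extensional_def not_less)
  qed
  also have "\<dots> = (\<Sum>y\<in>vecs n. chi (inner_zu n v y) * gv n w x y)"
    by (simp add: inner_zu_def chi_sum gv_def prod.distrib)
  finally show ?thesis .
qed

lemma orth:
  assumes C: "linear_code n C" and y: "y \<in> vecs n"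
  shows "(\<Sum>x\<in>C. chi (inner_zu n x y)) = (if y \<in> dual_code n C then of_nat (card C) else 0)"
proof (cases "y \<in> dual_code n C")
  case True
  then have "(\<Sum>x\<in>C. chi (inner_zu n x y)) = (\<Sum>x\<in>C. 1)"
    by (intro sum.cong refl) (simp add: dual_code_def)
  then show ?thesis using True by simp
next
  case False
  have Cs: "C \<subseteq> vecs n" and add: "\<forall>x\<in>C. \<forall>z\<in>C. (\<lambda>i. x i + z i) \<in> C"
    using C by (auto simp: linear_code_def)
  have sm: "\<And>r x. x \<in> C \<Longrightarrow> smult_zu r x \<in> C" using C unfolding linear_code_def by blast
  from False y obtain x0 where x0: "x0 \<in> C" "inner_zu n x0 y \<noteq> 0"
    by (auto simp: dual_code_def)
  obtain r where r: "zu_mult r (inner_zu n x0 y) = (0,2)" using zu_ideal[OF x0(2)] by blast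
  define x1 where "x1 = smult_zu r x0"
  have x1C: "x1 \<in> C" using sm x0 by (simp add: x1_def)
  have x1y: "inner_zu n x1 y = (0,2)" by (simp add: x1_def inner_smult r)
  define S where "S = (\<Sum>x\<in>C. chi (inner_zu n x y))"
  have bij: "bij_betw (\<lambda>x i. x i + x1 i) C C"
  proof (rule bij_betw_byWitness[where f'="\<lambda>z i. z i + smult_zu (-1,0) x1 i"])
    show "\<forall>a\<in>C. (\<lambda>i. (a i + x1 i) + smult_zu (-1, 0) x1 i) = a"
      by (simp add: smult_zu_def zu_mult_m1)
    show "\<forall>a\<in>C. (\<lambda>i. (a i + smult_zu (-1, 0) x1 i) + x1 i) = a"
      by (simp add: smult_zu_def zu_mult_m1)
    show "(\<lambda>x i. x i + x1 i) ` C \<subseteq> C" using add x1C by auto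
    show "(\<lambda>z i. z i + smult_zu (-1, 0) x1 i) ` C \<subseteq> C" using add sm[of _ "(-1,0)"] x1C by auto
  qed
  have "S = (\<Sum>x\<in>C. chi (inner_zu n (\<lambda>i. x i + x1 i) y))"
    unfolding S_def by (rule sum.reindex_bij_betw[OF bij, symmetric])
  also have "\<dots> = (\<Sum>x\<in>C. chi (inner_zu n x y) * (-1))"
    by (simp add: inner_add_left chi_add x1y chi_02)
  also have "\<dots> = - S" by (simp add: S_def sum_negf)
  finally have "S = 0" by simp
  then show ?thesis using False by (simp add: S_def)
qed

theorem theorem3p10:
  fixes n :: nat and C :: "(nat \<Rightarrow> zu) set" and W X :: real
  assumes "linear_code n C"
  shows "lee_enum n (dual_code n C) W X
           = (1 / real (card C)) * lee_enum n C (W + X) (W - X)"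
proof -
  define w where "w = complex_of_real W"
  define x where "x = complex_of_real X"
  define D where "D = dual_code n C"
  have Cs: "C \<subseteq> vecs n" and C0: "(\<lambda>i. 0) \<in> C" using assms by (auto simp: linear_code_def)
  have fC: "finite C" using finite_subset[OF Cs finite_vecs] .
  have cpos: "card C > 0" using fC C0 card_gt_0_iff by blast
  have Ds: "D \<subseteq> vecs n" by (auto simp: D_def dual_code_def)
  have "complex_of_real (lee_enum n C (W + X) (W - X)) = (\<Sum>c\<in>C. gv n (w+x) (w-x) c)"
    by (simp add: lee_enum_c w_def x_def)
  also have "\<dots> = (\<Sum>c\<in>C. \<Sum>y\<in>vecs n. chi (inner_zu n c y) * gv n w x y)"
    by (simp add: transform)
  also have "\<dots> = (\<Sum>y\<in>vecs n. (\<Sum>c\<in>C. chi (inner_zu n c y)) * gv n w x y)"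
    by (simp add: sum.swap[of _ C] sum_distrib_right)
  also have "\<dots> = (\<Sum>y\<in>vecs n. (if y \<in> D then of_nat (card C) * gv n w x y else 0))"
    by (intro sum.cong refl) (simp add: orth[OF assms] D_def)
  also have "\<dots> = of_nat (card C) * (\<Sum>y\<in>D. gv n w x y)"
    using Ds finite_vecs by (simp add: sum.If_cases sum_distrib_left Int_absorb1)
  also have "(\<Sum>y\<in>D. gv n w x y) = complex_of_real (lee_enum n D W X)"
    by (simp add: lee_enum_c w_def x_def)
  finally have "complex_of_real (lee_enum n C (W + X) (W - X)) = complex_of_real (real (card C) * lee_enum n D W X)"
    by simp
  then have "lee_enum n C (W + X) (W - X) = real (card C) * lee_enum n D W X"
    using of_real_eq_iff by blast
  then show ?thesis using cpos by (simp add: D_def)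
qed
end
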